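(* Let $\mathcal{L}$ be classical propositional logic $(\mathrm{Fm},\vdash_{\mathrm{CPL}})$ or intuitionistic propositional logic $(\mathrm{Fm},\vdash_{\mathrm{IPL}})$, and let $N\subseteq\mathrm{Fm}\times\mathrm{Fm}$ be closed under (WO). Let $P_N=\{(\alpha,\varphi)\mid(\alpha,\neg\varphi)\notin N\}$. Then $P_N$ is the largest relation $P\subseteq\mathrm{Fm}\times\mathrm{Fm}$ such that for all $\alpha,\varphi,\psi\in\mathrm{Fm}$: if $(\alpha,\varphi)\in P$ and $(\alpha,\psi)\in N$ then $Cn(\varphi,\psi)\neq\mathrm{Fm}$. (That is, $P_N$ has this property and contains every $P$ having it.)
   Context: $Cn(\Gamma)=\{\psi\mid\Gamma\vdash\psi\}$ for the relevant consequence relation $\vdash$, and $Cn(\varphi,\psi)=Cn(\{\varphi,\psi\})$. A normative system is a relation $N\subseteq\mathrm{Fm}\times\mathrm{Fm}$. $N$ is closed under (WO) if $(\alpha,\varphi)\in N$ and $\varphi\vdash\psi$ imply $(\alpha,\psi)\in N$. *)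

theory Defs
  imports Main
begin

datatype fm =
    Atom nat
  | Bot
  | Top
  | Neg fm
  | Conj fm fm
  | Disj fm fm
  | Imp fm fm

datatype logic = CPL | IPL

inductive derives :: "logic \<Rightarrow> fm set \<Rightarrow> fm \<Rightarrow> bool" where
  Assm:  "\<phi> \<in> \<Gamma> \<Longrightarrow> derives L \<Gamma> \<phi>"
| TopI:  "derives L \<Gamma> Top"
| BotE:  "derives L \<Gamma> Bot \<Longrightarrow> derives L \<Gamma> \<phi>"
| ConjI: "derives L \<Gamma> \<phi> \<Longrightarrow> derives L \<Gamma> \<psi> \<Longrightarrow> derives L \<Gamma> (Conj \<phi> \<psi>)"
| ConjE1: "derives L \<Gamma> (Conj \<phi> \<psi>) \<Longrightarrow> derives L \<Gamma> \<phi>"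
| ConjE2: "derives L \<Gamma> (Conj \<phi> \<psi>) \<Longrightarrow> derives L \<Gamma> \<psi>"
| DisjI1: "derives L \<Gamma> \<phi> \<Longrightarrow> derives L \<Gamma> (Disj \<phi> \<psi>)"
| DisjI2: "derives L \<Gamma> \<psi> \<Longrightarrow> derives L \<Gamma> (Disj \<phi> \<psi>)"
| DisjE: "derives L \<Gamma> (Disj \<phi> \<psi>) \<Longrightarrow> derives L (insert \<phi> \<Gamma>) \<chi> \<Longrightarrow>
          derives L (insert \<psi> \<Gamma>) \<chi> \<Longrightarrow> derives L \<Gamma> \<chi>"
| ImpI:  "derives L (insert \<phi> \<Gamma>) \<psi> \<Longrightarrow> derives L \<Gamma> (Imp \<phi> \<psi>)"
| ImpE:  "derives L \<Gamma> (Imp \<phi> \<psi>) \<Longrightarrow> derives L \<Gamma> \<phi> \<Longrightarrow> derives L \<Gamma> \<psi>"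
| NegI:  "derives L (insert \<phi> \<Gamma>) Bot \<Longrightarrow> derives L \<Gamma> (Neg \<phi>)"
| NegE:  "derives L \<Gamma> (Neg \<phi>) \<Longrightarrow> derives L \<Gamma> \<phi> \<Longrightarrow> derives L \<Gamma> Bot"
| RAA:   "L = CPL \<Longrightarrow> derives L (insert (Neg \<phi>) \<Gamma>) Bot \<Longrightarrow> derives L \<Gamma> \<phi>"

definition Cn :: "logic \<Rightarrow> fm set \<Rightarrow> fm set" where
  "Cn L \<Gamma> = {\<psi>. derives L \<Gamma> \<psi>}"

definition closed_WO :: "logic \<Rightarrow> (fm \<times> fm) set \<Rightarrow> bool" where
  "closed_WO L N \<longleftrightarrow>
     (\<forall>\<alpha> \<phi> \<psi>. (\<alpha>, \<phi>) \<in> N \<longrightarrow> derives L {\<phi>} \<psi> \<longrightarrow> (\<alpha>, \<psi>) \<in> N)"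

definition P_of :: "(fm \<times> fm) set \<Rightarrow> (fm \<times> fm) set" where
  "P_of N = {(\<alpha>, \<phi>). (\<alpha>, Neg \<phi>) \<notin> N}"

end

theory Submission
  imports Defs
begin

lemma expl: "derives L {\<phi>, Neg \<phi>} \<chi>"
  by (rule BotE, rule NegE[of _ _ \<phi>]) (auto intro: Assm)

theorem proposition2p6:
  fixes L :: logic and N :: "(fm \<times> fm) set"
  assumes "closed_WO L N"
  shows "(\<forall>\<alpha> \<phi> \<psi>. (\<alpha>, \<phi>) \<in> P_of N \<longrightarrow> (\<alpha>, \<psi>) \<in> N \<longrightarrow> Cn L {\<phi>, \<psi>} \<noteq> UNIV)
       \<and> (\<forall>P :: (fm \<times> fm) set.
            (\<forall>\<alpha> \<phi> \<psi>. (\<alpha>, \<phi>) \<in> P \<longrightarrow> (\<alpha>, \<psi>) \<in> N \<longrightarrow> Cn L {\<phi>, \<psi>} \<noteq> UNIV)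
            \<longrightarrow> P \<subseteq> P_of N)"
proof (intro conjI allI impI)
  fix \<alpha> \<phi> \<psi>
  assume a: "(\<alpha>, \<phi>) \<in> P_of N" and b: "(\<alpha>, \<psi>) \<in> N"
  show "Cn L {\<phi>, \<psi>} \<noteq> UNIV"
  proof
    assume "Cn L {\<phi>, \<psi>} = UNIV"
    then have "derives L (insert \<phi> {\<psi>}) Bot" unfolding Cn_def by blast
    then have "derives L {\<psi>} (Neg \<phi>)" by (rule NegI)
    with assms b have "(\<alpha>, Neg \<phi>) \<in> N" unfolding closed_WO_def by blast
    with a show False unfolding P_of_def by auto
  qed
next
  fix P :: "(fm \<times> fm) set"
  assume h: "\<forall>\<alpha> \<phi> \<psi>. (\<alpha>, \<phi>) \<in> P \<longrightarrow> (\<alpha>, \<psi>) \<in> N \<longrightarrow> Cn L {\<phi>, \<psi>} \<noteq> UNIV"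
  show "P \<subseteq> P_of N"
  proof
    fix x assume x: "x \<in> P"
    obtain \<alpha> \<phi> where xe: "x = (\<alpha>, \<phi>)" by (cases x)
    show "x \<in> P_of N"
    proof (rule ccontr)
      assume "x \<notin> P_of N"
      then have "(\<alpha>, Neg \<phi>) \<in> N" unfolding P_of_def xe by auto
      with h x xe have "Cn L {\<phi>, Neg \<phi>} \<noteq> UNIV" by blast
      moreover have "Cn L {\<phi>, Neg \<phi>} = UNIV" unfolding Cn_def using expl by blast
      ultimately show False by simp
    qed
  qed
qed

end
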